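(* Let $V=[\alpha_1,\beta_1]\times\dots\times[\alpha_d,\beta_d]$ be an axis-parallel box in $\mathbb{R}^d$ and let $\mathcal{G}_1,\dots,\mathcal{G}_n$ be non-empty collections of axis-parallel boxes in $\mathbb{R}^d$ such that (i) for every $i\in[n]$, every $B\in\mathcal{G}_i$ and every $j\in[d]$, $\Pi_j(B)\cap\{\alpha_j,\beta_j\}\neq\emptyset$ (so $B$ contains at least one vertex of $V$), and (ii) every colorful $n$-tuple is hit by at least one diagonally opposite pair of vertices of $V$. Let $(V_1,\dots,V_r)$, with $r<n$, be a colorful $r$-tuple such that there are at most $2^k$, with $k<d$, distinct diagonally opposite pairs of vertices of $V$ each of which hits $(V_1,\dots,V_r)$. Then at least one of the following holds: Option 1: for every diagonally opposite pair $(\lambda,\lambda')$ of vertices of $V$ hitting $(V_1,\dots,V_r)$ and every family $\mathcal{G}_i$ with $V_k\notin\mathcal{G}_i$ for all $k\in[r]$, the family $\mathcal{G}_i$ is hit by $\{\lambda,\lambda'\}$; Option 2: there exist $i\in[n]$ and $V_{r+1}\in\mathcal{G}_i$ such that $(V_1,\dots,V_r,V_{r+1})$ is a colorful tuple and there are at most $2^{k-1}$ distinct diagonally opposite pairs of vertices of $V$ each of which hits $(V_1,\dots,V_r,V_{r+1})$.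
   Context: For a box $B=[\alpha_1,\beta_1]\times\dots\times[\alpha_d,\beta_d]$, $\Pi_j(B)=[\alpha_j,\beta_j]$. A vertex of $V$ is a point $(\lambda_1,\dots,\lambda_d)$ with $\lambda_j\in\{\alpha_j,\beta_j\}$ for all $j$; vertices $\lambda,\lambda'$ are diagonally opposite if $\{\lambda_j,\lambda'_j\}=\{\alpha_j,\beta_j\}$ for all $j$. A set of points hits a tuple or family of boxes if every box contains at least one of the points. Given families $\mathcal{G}_1,\dots,\mathcal{G}_n$, a colorful $t$-tuple is $(C_1,\dots,C_t)$ with $C_j\in\mathcal{G}_{i_j}$ for pairwise distinct indices $i_1,\dots,i_t\in[n]$. *)

theory Defs
  imports "HOL-Analysis.Analysis"
begin

text \<open>Points of R^d are vectors of type real^'d (d = CARD('d)). An axis-parallel box is a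
  (non-empty) closed box cbox a b with a$j \<le> b$j for all coordinates j.\<close>

definition is_box :: "(real^'d) set \<Rightarrow> bool" where
  "is_box B \<longleftrightarrow> (\<exists>a b. (\<forall>j. a$j \<le> b$j) \<and> B = cbox a b)"

definition proj :: "'d \<Rightarrow> (real^'d) set \<Rightarrow> real set" where
  "proj j B = (\<lambda>x. x$j) ` B"

definition is_vertex :: "real^'d \<Rightarrow> real^'d \<Rightarrow> real^'d \<Rightarrow> bool" where
  "is_vertex al be l \<longleftrightarrow> (\<forall>j. l$j \<in> {al$j, be$j})"

definition diag_opp :: "real^'d \<Rightarrow> real^'d \<Rightarrow> real^'d \<Rightarrow> real^'d \<Rightarrow> bool" where
  "diag_opp al be l l' \<longleftrightarrow> is_vertex al be l \<and> is_vertex al be l' \<and>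
     (\<forall>j. {l$j, l'$j} = {al$j, be$j})"

definition diag_pairs :: "real^'d \<Rightarrow> real^'d \<Rightarrow> (real^'d) set set" where
  "diag_pairs al be = {{l, l'} | l l'. diag_opp al be l l'}"

definition hits :: "'a set \<Rightarrow> 'a set set \<Rightarrow> bool" where
  "hits P F \<longleftrightarrow> (\<forall>B\<in>F. \<exists>p\<in>P. p \<in> B)"

definition colorful :: "(nat \<Rightarrow> 'a set) \<Rightarrow> nat \<Rightarrow> 'a list \<Rightarrow> bool" where
  "colorful G n Cs \<longleftrightarrow> (\<exists>is. length is = length Cs \<and> distinct is \<and> set is \<subseteq> {1..n} \<and>
      (\<forall>j<length Cs. Cs!j \<in> G (is!j)))"

end

theory Submission
  imports Defs
begin

definition cmp :: "real^'d \<Rightarrow> real^'d \<Rightarrow> real^'d \<Rightarrow> real^'d" where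
  "cmp al be x = (\<chi> j. al$j + be$j - x$j)"
definition flp :: "real^'d \<Rightarrow> real^'d \<Rightarrow> real^'d \<Rightarrow> real^'d \<Rightarrow> real^'d \<Rightarrow> real^'d" where
  "flp al be x y w = (\<chi> j. if x$j = y$j then w$j else al$j + be$j - w$j)"
definition pr2 :: "real^'d \<Rightarrow> real^'d \<Rightarrow> real^'d \<Rightarrow> (real^'d) set" where
  "pr2 al be x = {x, cmp al be x}"

lemma vtx: "is_vertex al be x \<Longrightarrow> x$j = al$j \<or> x$j = be$j"
  unfolding is_vertex_def by blast

lemma vert_cmp: assumes "is_vertex al be x" shows "is_vertex al be (cmp al be x)"
  unfolding is_vertex_def cmp_def
proof (intro allI)
  fix j
  from assms have "x$j = al$j \<or> x$j = be$j" by (rule vtx)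
  then show "(\<chi> j. al$j + be$j - x$j)$j \<in> {al$j, be$j}" by auto
qed

lemma vert_flp: assumes "is_vertex al be w" shows "is_vertex al be (flp al be x y w)"
  unfolding is_vertex_def flp_def
proof (intro allI)
  fix j
  from assms have "w$j = al$j \<or> w$j = be$j" by (rule vtx)
  then show "(\<chi> j. if x$j = y$j then w$j else al$j + be$j - w$j)$j \<in> {al$j, be$j}" by auto
qed

lemma diag_pairs_char: "diag_pairs al be = pr2 al be ` {x. is_vertex al be x}"
proof -
  have "diag_opp al be l l' \<longleftrightarrow> is_vertex al be l \<and> l' = cmp al be l" for l l'
  proof
    assume d: "diag_opp al be l l'"
    then have v: "is_vertex al be l" by (simp add: diag_opp_def)
    have "l'$j = al$j + be$j - l$j" for j
    proof -
      have e: "{l$j, l'$j} = {al$j, be$j}" using d unfolding diag_opp_def by blast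
      have "l$j = al$j \<or> l$j = be$j" using v by (rule vtx)
      then show ?thesis using e by (auto simp: doubleton_eq_iff)
    qed
    then show "is_vertex al be l \<and> l' = cmp al be l" using v
      by (simp add: cmp_def vec_eq_iff)
  next
    assume a: "is_vertex al be l \<and> l' = cmp al be l"
    have "{l$j, l'$j} = {al$j, be$j}" for j
    proof -
      have "l$j = al$j \<or> l$j = be$j" using a vtx by blast
      then show ?thesis using a unfolding cmp_def by auto
    qed
    then show "diag_opp al be l l'" using a vert_cmp[of al be l] unfolding diag_opp_def by auto
  qed
  then show ?thesis unfolding diag_pairs_def pr2_def by auto
qed

lemma flp_flp: "flp al be x y (flp al be x y w) = w"
  unfolding flp_def by (simp add: vec_eq_iff)

lemma cmp_cmp: "cmp al be (cmp al be w) = w"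
  unfolding cmp_def by (simp add: vec_eq_iff)

lemma flp_cmp: "flp al be x y (cmp al be w) = cmp al be (flp al be x y w)"
  unfolding flp_def cmp_def by (simp add: vec_eq_iff)

lemma flp_cmp1:
  assumes "is_vertex al be x" "is_vertex al be y" "is_vertex al be w"
  shows "flp al be (cmp al be x) y w = cmp al be (flp al be x y w)"
  unfolding vec_eq_iff
proof
  fix j
  have "x$j = al$j \<or> x$j = be$j" "y$j = al$j \<or> y$j = be$j" "w$j = al$j \<or> w$j = be$j"
    using assms vtx by blast+
  then show "flp al be (cmp al be x) y w $ j = cmp al be (flp al be x y w) $ j"
    unfolding flp_def cmp_def by auto
qed

lemma flp_cmp2:
  assumes "is_vertex al be x" "is_vertex al be y" "is_vertex al be w"
  shows "flp al be x (cmp al be y) w = cmp al be (flp al be x y w)"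
  unfolding vec_eq_iff
proof
  fix j
  have "x$j = al$j \<or> x$j = be$j" "y$j = al$j \<or> y$j = be$j" "w$j = al$j \<or> w$j = be$j"
    using assms vtx by blast+
  then show "flp al be x (cmp al be y) w $ j = cmp al be (flp al be x y w) $ j"
    unfolding flp_def cmp_def by auto
qed

lemma image_pr2: "flp al be x y ` pr2 al be z = pr2 al be (flp al be x y z)"
  unfolding pr2_def by (simp add: flp_cmp)

lemma core:
  assumes "is_vertex al be x" "is_vertex al be y" "is_vertex al be z"
   "x \<in> cbox a b" "y \<in> cbox a b" "z \<in> cbox a b"
  shows "flp al be x y z \<in> cbox a b"
  unfolding mem_box_cart
proof
  fix j
  have "x$j = al$j \<or> x$j = be$j" "y$j = al$j \<or> y$j = be$j" "z$j = al$j \<or> z$j = be$j"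
    using assms vtx by blast+
  moreover have "a$j \<le> x$j \<and> x$j \<le> b$j" "a$j \<le> y$j \<and> y$j \<le> b$j" "a$j \<le> z$j \<and> z$j \<le> b$j"
    using assms(4-6) unfolding mem_box_cart by blast+
  ultimately show "a$j \<le> flp al be x y z $ j \<and> flp al be x y z $ j \<le> b$j"
    unfolding flp_def by auto
qed

lemma hit1:
  assumes v: "is_vertex al be x" "is_vertex al be y" "is_vertex al be z"
    and h: "\<exists>p\<in>pr2 al be x. p \<in> cbox a b" "\<exists>p\<in>pr2 al be y. p \<in> cbox a b" "\<exists>p\<in>pr2 al be z. p \<in> cbox a b"
  shows "\<exists>p\<in>pr2 al be (flp al be x y z). p \<in> cbox a b"
proof -
  obtain x' where x': "x' \<in> pr2 al be x" "x' \<in> cbox a b" using h by blast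
  obtain y' where y': "y' \<in> pr2 al be y" "y' \<in> cbox a b" using h by blast
  obtain z' where z': "z' \<in> pr2 al be z" "z' \<in> cbox a b" using h by blast
  have vx: "is_vertex al be x'" using x' v vert_cmp unfolding pr2_def by blast
  have vy: "is_vertex al be y'" using y' v vert_cmp unfolding pr2_def by blast
  have vz: "is_vertex al be z'" using z' v vert_cmp unfolding pr2_def by blast
  have c: "flp al be x' y' z' \<in> cbox a b" using core[OF vx vy vz x'(2) y'(2) z'(2)] .
  have cx: "x' = x \<or> x' = cmp al be x" using x'(1) unfolding pr2_def by blast
  have cy: "y' = y \<or> y' = cmp al be y" using y'(1) unfolding pr2_def by blast
  have cz: "z' = z \<or> z' = cmp al be z" using z'(1) unfolding pr2_def by blast
  have vc: "is_vertex al be (cmp al be x)" "is_vertex al be (cmp al be y)" using v vert_cmp by blast+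
  have "flp al be x' y' z' \<in> pr2 al be (flp al be x y z)"
    using cx cy cz
    unfolding pr2_def
    by (elim disjE) (simp_all add: flp_cmp1[OF v] flp_cmp2[OF v] flp_cmp cmp_cmp
        flp_cmp1[OF v(1) vc(2) v(3)] flp_cmp2[OF vc(1) v(2) v(3)] flp_cmp1[OF v(1) v(2) vert_cmp[OF v(3)]]
        flp_cmp2[OF v(1) v(2) vert_cmp[OF v(3)]] flp_cmp1[OF v(1) vc(2) vert_cmp[OF v(3)]])
  then show ?thesis using c by blast
qed

lemma flp_back:
  assumes "is_vertex al be x" "is_vertex al be y" "is_vertex al be z"
  shows "flp al be z (flp al be x y z) y = x"
  unfolding vec_eq_iff
proof
  fix j
  have "x$j = al$j \<or> x$j = be$j" "y$j = al$j \<or> y$j = be$j" "z$j = al$j \<or> z$j = be$j"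
    using assms vtx by blast+
  then show "flp al be z (flp al be x y z) y $ j = x $ j"
    unfolding flp_def by auto
qed

lemma hit2:
  assumes v: "is_vertex al be x" "is_vertex al be y" "is_vertex al be z"
    and h: "\<exists>p\<in>pr2 al be y. p \<in> cbox a b" "\<exists>p\<in>pr2 al be z. p \<in> cbox a b"
      "\<exists>p\<in>pr2 al be (flp al be x y z). p \<in> cbox a b"
  shows "\<exists>p\<in>pr2 al be x. p \<in> cbox a b"
  using hit1[OF v(3) vert_flp[OF v(3)] v(2) h(2) h(3) h(1)] flp_back[OF v] by simp

lemma finite_vert: "finite {x::real^'d. is_vertex al be x}"
proof -
  have "{x::real^'d. is_vertex al be x} \<subseteq> (\<lambda>s::'d\<Rightarrow>bool. \<chi> j. if s j then be$j else al$j) ` UNIV"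
  proof
    fix x :: "real^'d" assume "x \<in> {x. is_vertex al be x}"
    then have "x = (\<chi> j. if x$j = be$j then be$j else al$j)"
      unfolding is_vertex_def by (auto simp: vec_eq_iff)
    then show "x \<in> range (\<lambda>s::'d\<Rightarrow>bool. \<chi> j. if s j then be$j else al$j)"
      by (rule image_eqI[where x="\<lambda>j. x$j = be$j"]) auto
  qed
  then show ?thesis by (rule finite_subset) simp
qed

theorem lemma5:
  fixes al be :: "real^'d" and G :: "nat \<Rightarrow> (real^'d) set set"
    and n k :: nat and Vs :: "(real^'d) set list"
  assumes V_box: "\<forall>j. al$j \<le> be$j"
    and G_ne: "\<forall>i\<in>{1..n}. G i \<noteq> {}"
    and G_boxes: "\<forall>i\<in>{1..n}. \<forall>B\<in>G i. is_box B"
    and cond_i: "\<forall>i\<in>{1..n}. \<forall>B\<in>G i. \<forall>j. proj j B \<inter> {al$j, be$j} \<noteq> {}"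
    and cond_ii: "\<forall>Cs. colorful G n Cs \<and> length Cs = n \<longrightarrow>
                    (\<exists>P\<in>diag_pairs al be. hits P (set Cs))"
    and r_lt: "length Vs < n"
    and Vs_col: "colorful G n Vs"
    and k_lt: "k < CARD('d)"
    and few: "card {P\<in>diag_pairs al be. hits P (set Vs)} \<le> 2 ^ k"
  shows "(\<forall>P\<in>diag_pairs al be. hits P (set Vs) \<longrightarrow>
            (\<forall>i\<in>{1..n}. (\<forall>m<length Vs. Vs!m \<notin> G i) \<longrightarrow> hits P (G i)))
       \<or> (\<exists>i\<in>{1..n}. \<exists>W\<in>G i. colorful G n (Vs @ [W]) \<and>
            real (card {P\<in>diag_pairs al be. hits P (set (Vs @ [W]))}) \<le> (2::real) powi (int k - 1))"
proof (rule ccontr)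
  assume neg: "\<not> ?thesis"
  then have "\<not> (\<forall>P\<in>diag_pairs al be. hits P (set Vs) \<longrightarrow>
            (\<forall>i\<in>{1..n}. (\<forall>m<length Vs. Vs!m \<notin> G i) \<longrightarrow> hits P (G i)))" by blast
  then obtain P i where P: "P \<in> diag_pairs al be" "hits P (set Vs)" and i: "i \<in> {1..n}"
    "\<forall>m<length Vs. Vs!m \<notin> G i" "\<not> hits P (G i)" by blast
  from i(3) obtain W where W: "W \<in> G i" "\<forall>p\<in>P. p \<notin> W" unfolding hits_def by blast
  obtain x where x: "is_vertex al be x" "P = pr2 al be x" using P(1) diag_pairs_char by blast
  obtain ix where ix: "length ix = length Vs" "distinct ix" "set ix \<subseteq> {1..n}"
    "\<forall>j<length Vs. Vs!j \<in> G (ix!j)" using Vs_col unfolding colorful_def by blast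
  have inot: "i \<notin> set ix"
  proof
    assume "i \<in> set ix"
    then obtain m where "m < length ix" "ix!m = i" by (auto simp: in_set_conv_nth)
    then show False using ix(1,4) i(2) by auto
  qed
  have colW: "colorful G n (Vs @ [W])"
    unfolding colorful_def
  proof (rule exI[of _ "ix @ [i]"], intro conjI)
    show "length (ix @ [i]) = length (Vs @ [W])" using ix(1) by simp
    show "distinct (ix @ [i])" using ix(2) inot by simp
    show "set (ix @ [i]) \<subseteq> {1..n}" using ix(3) i(1) by simp
    show "\<forall>j<length (Vs @ [W]). (Vs @ [W]) ! j \<in> G ((ix @ [i]) ! j)"
    proof (intro allI impI)
      fix j assume j: "j < length (Vs @ [W])"
      show "(Vs @ [W]) ! j \<in> G ((ix @ [i]) ! j)"
      proof (cases "j < length Vs")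
        case True then show ?thesis using ix(1,4) by (simp add: nth_append)
      next
        case False then have "j = length Vs" using j by simp
        then show ?thesis using ix(1) W(1) by (simp add: nth_append)
      qed
    qed
  qed
  have Vbox: "\<forall>B\<in>set Vs. \<exists>a b. B = cbox a b"
  proof
    fix B assume "B \<in> set Vs"
    then obtain m where m: "m < length Vs" "B = Vs!m" by (auto simp: in_set_conv_nth)
    then have "ix!m \<in> set ix" using ix(1) by simp
    then have "ix!m \<in> {1..n}" using ix(3) by blast
    moreover have "B \<in> G (ix!m)" using ix(4) m by simp
    ultimately have "is_box B" using G_boxes by blast
    then show "\<exists>a b. B = cbox a b" unfolding is_box_def by blast
  qed
  obtain aW bW where Wbox: "W = cbox aW bW" using G_boxes i(1) W(1) unfolding is_box_def by blast
  define S where "S = {P\<in>diag_pairs al be. hits P (set Vs)}"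
  define T where "T = {P\<in>diag_pairs al be. hits P (set (Vs @ [W]))}"
  have "finite (diag_pairs al be)" unfolding diag_pairs_char using finite_vert by (rule finite_imageI)
  then have finS: "finite S" unfolding S_def by simp
  have TS: "T \<subseteq> S" unfolding S_def T_def hits_def by auto
  have finT: "finite T" using TS finS finite_subset by blast
  have "card T \<le> card (S - T)"
  proof (cases "T = {}")
    case True then show ?thesis by simp
  next
    case False
    then obtain Q where Q: "Q \<in> T" by blast
    then obtain y where y: "is_vertex al be y" "Q = pr2 al be y" using diag_pairs_char unfolding T_def by blast
    define f where "f = flp al be x y"
    have ff: "f ` (f ` A) = A" for A by (simp add: image_image f_def flp_flp)
    have injf: "inj_on (image f) T"
    proof (rule inj_onI)
      fix A B assume "f ` A = f ` B"
      then have "f ` (f ` A) = f ` (f ` B)" by simp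
      then show "A = B" using ff by simp
    qed
    have "image f ` T \<subseteq> S - T"
    proof
      fix R assume "R \<in> image f ` T"
      then obtain Z where Z: "Z \<in> T" "R = f ` Z" by blast
      then obtain z where z: "is_vertex al be z" "Z = pr2 al be z" using diag_pairs_char unfolding T_def by blast
      have R: "R = pr2 al be (f z)" using Z z image_pr2 f_def by simp
      have Rd: "R \<in> diag_pairs al be" unfolding R diag_pairs_char f_def
        using vert_flp[OF z(1)] by blast
      have "hits R (set Vs)" unfolding hits_def
      proof
        fix B assume B: "B \<in> set Vs"
        then obtain a b where ab: "B = cbox a b" using Vbox by blast
        have hx: "\<exists>p\<in>P. p \<in> B" using P(2) B unfolding hits_def by blast
        have hy: "\<exists>p\<in>Q. p \<in> B" using Q B unfolding T_def hits_def by simp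
        have hz: "\<exists>p\<in>Z. p \<in> B" using Z(1) B unfolding T_def hits_def by simp
        have "\<exists>p\<in>pr2 al be x. p \<in> cbox a b" using hx x(2) ab by simp
        moreover have "\<exists>p\<in>pr2 al be y. p \<in> cbox a b" using hy y(2) ab by simp
        moreover have "\<exists>p\<in>pr2 al be z. p \<in> cbox a b" using hz z(2) ab by simp
        ultimately show "\<exists>p\<in>R. p \<in> B" using hit1[OF x(1) y(1) z(1)] R ab f_def by simp
      qed
      moreover have "\<not> hits R {W}"
      proof
        assume "hits R {W}"
        then have "\<exists>p\<in>pr2 al be (flp al be x y z). p \<in> cbox aW bW" using R Wbox f_def unfolding hits_def by simp
        moreover have "\<exists>p\<in>pr2 al be y. p \<in> cbox aW bW"
        proof -
          have "\<exists>p\<in>Q. p \<in> W" using Q unfolding T_def hits_def by simp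
          then show ?thesis using y(2) Wbox by simp
        qed
        moreover have "\<exists>p\<in>pr2 al be z. p \<in> cbox aW bW"
        proof -
          have "\<exists>p\<in>Z. p \<in> W" using Z(1) unfolding T_def hits_def by simp
          then show ?thesis using z(2) Wbox by simp
        qed
        ultimately have "\<exists>p\<in>pr2 al be x. p \<in> cbox aW bW" using hit2[OF x(1) y(1) z(1)] by blast
        then show False using W(2) x(2) Wbox by blast
      qed
      ultimately show "R \<in> S - T" unfolding S_def T_def using Rd by (simp add: hits_def)
    qed
    then show ?thesis using card_inj_on_le[OF injf] finS by blast
  qed
  then have "2 * card T \<le> card S" using card_Diff_subset[OF finT TS] card_mono[OF finS TS] by linarith
  moreover have "card S \<le> 2 ^ k" using few by (simp add: S_def)
  ultimately have "2 * card T \<le> (2::nat) ^ k" by linarith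
  then have c: "2 * real (card T) \<le> 2 ^ k" 
  proof -
    have "real (2 * card T) \<le> real ((2::nat) ^ k)" using \<open>2 * card T \<le> 2 ^ k\<close> by (simp only: of_nat_le_iff)
    then show ?thesis by simp
  qed
  have "(2::real) powi (int k - 1) = 2 ^ k / 2"
    by (simp add: power_int_diff)
  then have "real (card T) \<le> (2::real) powi (int k - 1)" using c by simp
  then have "\<exists>i\<in>{1..n}. \<exists>W\<in>G i. colorful G n (Vs @ [W]) \<and>
            real (card {P\<in>diag_pairs al be. hits P (set (Vs @ [W]))}) \<le> (2::real) powi (int k - 1)"
    unfolding T_def using i(1) W(1) colW by blast
  then show False using neg by blast
qed

end
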